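(* Under Assumptions 1, 2, 3 and 5 (with $\|\cdot\|_*=\|\cdot\|_2$), with the RSA iterates, stepsizes and $g^N$ as in the context, define for $\Theta>0$ $$a(\Theta,N)=\frac{\Theta M_1}{\sqrt N},\quad b(\Theta,X,N)=\frac{K_1(X)+\Theta(K_2(X)-M_1)}{\sqrt N},$$ $\mathrm{Up}_1(\Theta_1,N)=g^N+a(\Theta_1,N)$ and $\mathrm{Low}_1(\Theta_2,\Theta_3,N)=g^N-b(\Theta_2,X,N)-a(\Theta_3,N)$. Then for all $\Theta_1,\Theta_2,\Theta_3>0$, $$\mathbb P\Big(f(x_* )\in[\mathrm{Low}_1(\Theta_2,\Theta_3,N),\mathrm{Up}_1(\Theta_1,N)]\Big)\ge1-e^{-\Theta_1^2/4}-e^{1-\Theta_2^2}-e^{-\Theta_2^2/4}-e^{-\Theta_3^2/4}.$$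
   Context: Setting: $E=\mathbb R^n$, $\|\cdot\|=\|\cdot\|_*=\|\cdot\|_2$; $X$ nonempty closed bounded convex; $f(x)=\mathbb E[g(x,\xi)]$ convex Lipschitz with minimizer $x_*$ on $X$, $g$ Borel, convex in $x$; $\xi_1,\xi_2,\dots$ i.i.d. copies of $\xi$; oracle returns $g(x,\xi_t)$ and measurable $G(x,\xi_t)\in\partial_xg(x,\xi_t)$; $f'(x)=\mathbb E[G(x,\xi)]$, $\delta=g-f$, $\Delta=G-f'$. RSA: $x_1\in X$, $x_{t+1}=\Pi_X(x_t-\gamma G(x_t,\xi_t))$, $t=1,\dots,N-1$, with $\gamma=D_X/(\sqrt{2(M_2^2+L^2)}\sqrt N)$, $D_X=\max_{x\in X}\|x-x_1\|_2$; $g^N=\frac1N\sum_{\tau=1}^Ng(x_\tau,\xi_\tau)$. $K_1(X)=\frac{D_X(M_2^2+2L^2)}{\sqrt{2(M_2^2+L^2)}}$, $K_2(X)=\frac{D_XM_2^2}{\sqrt{2(M_2^2+L^2)}}+2D_XM_2+M_1$. Assumption 1: $\|f'(x)\|_*\le L$ on $X$. Assumption 2: $f=\mathbb E g$, $\mathbb E G(x,\xi)\in\partial f(x)$. Assumption 3: $\mathbb E\delta^2\le M_1^2$, $\mathbb E\|\Delta\|_*^2\le M_2^2$ on $X$. Assumption 5: $\mathbb E[\exp\{\delta^2(x,\xi)/M_1^2\}]\le e$ and $\|\Delta(x,\xi)\|_*\le M_2$ a.s. for all $x\in X$. *)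

theory Defs
  imports "HOL-Probability.Probability"
begin

definition is_subgradient :: "'a::euclidean_space set \<Rightarrow> ('a \<Rightarrow> real) \<Rightarrow> 'a \<Rightarrow> 'a \<Rightarrow> bool" where
  "is_subgradient X \<phi> x v \<longleftrightarrow> (\<forall>y\<in>X. \<phi> y \<ge> \<phi> x + inner v (y - x))"

(* RSA iterates, 0-based: rsa_iter .. k \<omega> is x_{k+1}; xi k is \<xi>_{k+1}.
   x_1 = x1,  x_{t+1} = Pi_X (x_t - \<gamma> G(x_t, \<xi>_t)). *)
fun rsa_iter :: "'a::euclidean_space set \<Rightarrow> ('a \<Rightarrow> 'b \<Rightarrow> 'a) \<Rightarrow> real \<Rightarrow> 'a \<Rightarrow> (nat \<Rightarrow> 'w \<Rightarrow> 'b)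
                  \<Rightarrow> nat \<Rightarrow> 'w \<Rightarrow> 'a" where
  "rsa_iter X G \<gamma> x1 xi 0 \<omega> = x1"
| "rsa_iter X G \<gamma> x1 xi (Suc k) \<omega> =
     closest_point X (rsa_iter X G \<gamma> x1 xi k \<omega> - \<gamma> *\<^sub>R G (rsa_iter X G \<gamma> x1 xi k \<omega>) (xi k \<omega>))"

definition diam_from :: "'a::euclidean_space set \<Rightarrow> 'a \<Rightarrow> real" where
  "diam_from X x1 = Sup ((\<lambda>x. norm (x - x1)) ` X)"

definition rsa_step :: "real \<Rightarrow> real \<Rightarrow> real \<Rightarrow> nat \<Rightarrow> real" where
  "rsa_step DX M2 L N = DX / (sqrt (2 * (M2\<^sup>2 + L\<^sup>2)) * sqrt (real N))"

definition gN :: "'a::euclidean_space set \<Rightarrow> ('a \<Rightarrow> 'b \<Rightarrow> real) \<Rightarrow> ('a \<Rightarrow> 'b \<Rightarrow> 'a) \<Rightarrow> real \<Rightarrow> 'a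
                  \<Rightarrow> (nat \<Rightarrow> 'w \<Rightarrow> 'b) \<Rightarrow> nat \<Rightarrow> 'w \<Rightarrow> real" where
  "gN X g G \<gamma> x1 xi N \<omega> = (\<Sum>k<N. g (rsa_iter X G \<gamma> x1 xi k \<omega>) (xi k \<omega>)) / real N"

definition K1 :: "real \<Rightarrow> real \<Rightarrow> real \<Rightarrow> real" where
  "K1 DX M2 L = DX * (M2\<^sup>2 + 2 * L\<^sup>2) / sqrt (2 * (M2\<^sup>2 + L\<^sup>2))"

definition K2 :: "real \<Rightarrow> real \<Rightarrow> real \<Rightarrow> real \<Rightarrow> real" where
  "K2 DX M1 M2 L = DX * M2\<^sup>2 / sqrt (2 * (M2\<^sup>2 + L\<^sup>2)) + 2 * DX * M2 + M1"

definition a_bnd :: "real \<Rightarrow> real \<Rightarrow> nat \<Rightarrow> real" where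
  "a_bnd \<Theta> M1 N = \<Theta> * M1 / sqrt (real N)"

definition b_bnd :: "real \<Rightarrow> real \<Rightarrow> real \<Rightarrow> real \<Rightarrow> real \<Rightarrow> nat \<Rightarrow> real" where
  "b_bnd \<Theta> DX M1 M2 L N = (K1 DX M2 L + \<Theta> * (K2 DX M1 M2 L - M1)) / sqrt (real N)"

end

theory Submission
  imports Defs
begin


lemma exp_le_x_plus_exp_sq: "exp (x::real) \<le> x + exp (x\<^sup>2)"
proof (cases "x \<ge> 1")
  case True
  then have "x \<le> x\<^sup>2" by (simp add: power2_eq_square)
  then show ?thesis using True by (meson add_increasing exp_le_cancel_iff order_trans zero_le_one)
next
  case False
  have e2: "1 + x\<^sup>2 \<le> exp (x\<^sup>2)" by simp
  show ?thesis
  proof (cases "x \<ge> 0")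
    case True
    then show ?thesis using exp_bound[of x] False e2 by linarith
  next
    case neg: False
    have q: "1 + (-x) + (-x)\<^sup>2 / 2 \<le> exp (-x)" by (rule exp_lower_Taylor_quadratic) (use neg in auto)
    have pos: "0 < 1 + (-x) + (-x)\<^sup>2 / 2" using neg by (simp add: add_pos_nonneg)
    have "exp x = 1 / exp (-x)" by (simp add: exp_minus field_simps)
    also have "\<dots> \<le> 1 / (1 + (-x) + (-x)\<^sup>2 / 2)" using q pos by (intro divide_left_mono) auto
    also have "\<dots> \<le> 1 + x + x\<^sup>2"
    proof -
      have "1 \<le> (1 + x + x\<^sup>2) * (1 + (-x) + (-x)\<^sup>2 / 2)"
      proof -
        have "(1 + x + x\<^sup>2) * (1 + (-x) + (-x)\<^sup>2 / 2) = 1 + x\<^sup>2/2 - x^3/2 + x^4/2"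
          by (simp add: algebra_simps power2_eq_square power3_eq_cube power4_eq_xxxx divide_simps)
        moreover have "x^3 \<le> 0" using neg mult_nonpos_nonneg[of x "x*x"] by (simp add: power3_eq_cube)
        moreover have "0 \<le> x^4" by (simp add: zero_le_even_power)
        ultimately show ?thesis using zero_le_power2[of x] by linarith
      qed
      then show ?thesis using pos by (simp add: divide_le_eq)
    qed
    finally show ?thesis using e2 by linarith
  qed
qed

lemma exp_concave_tangent:
  fixes u w :: real
  assumes "0 \<le> u" "u \<le> 1"
  shows "exp (u * w) \<le> exp u * (1 - u) + u * exp (u - 1) * exp w"
proof -
  have "exp ((1 - u) *\<^sub>R 0 + u *\<^sub>R (w - 1)) \<le> (1 - u) * exp 0 + u * exp (w - 1)"
    using convex_onD[OF exp_convex, of u 0 "w - 1"] assms by simp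
  then have "exp (u * (w - 1)) \<le> (1 - u) + u * exp (w - 1)" by simp
  then have "exp u * exp (u * (w - 1)) \<le> exp u * ((1 - u) + u * exp (w - 1))"
    by (intro mult_left_mono) auto
  moreover have "exp u * exp (u * (w - 1)) = exp (u * w)" by (simp add: exp_add[symmetric] algebra_simps)
  moreover have "exp u * exp (w - 1) = exp (u - 1) * exp w" by (simp add: exp_add[symmetric] algebra_simps)
  ultimately show ?thesis by (simp add: algebra_simps)
qed

lemma subg_mgf:
  fixes P :: "'b measure" and h :: "'b \<Rightarrow> real"
  assumes P: "prob_space P" and hm: "h \<in> borel_measurable P" and hi: "integrable P h"
    and h0: "integral\<^sup>L P h = 0" and \<sigma>: "\<sigma> > 0"
    and nn: "(\<integral>\<^sup>+ s. ennreal (exp ((h s)\<^sup>2 / \<sigma>\<^sup>2)) \<partial>P) \<le> ennreal (exp 1)"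
  shows "(\<integral>\<^sup>+ s. ennreal (exp (t * h s)) \<partial>P) \<le> ennreal (exp (t\<^sup>2 * \<sigma>\<^sup>2))"
proof -
  interpret prob_space P by (rule P)
  define W where "W s = exp ((h s)\<^sup>2 / \<sigma>\<^sup>2)" for s
  have Wm: "W \<in> borel_measurable P" unfolding W_def using hm by measurable
  have Wi: "integrable P W"
    by (rule integrableI_bounded[OF Wm]) (use nn in \<open>auto simp: W_def intro: le_less_trans\<close>)
  have "ennreal (integral\<^sup>L P W) \<le> ennreal (exp 1)"
    using nn Wi by (subst nn_integral_eq_integral[symmetric]) (auto simp: W_def)
  then have WI: "integral\<^sup>L P W \<le> exp 1" by (simp add: ennreal_le_iff2)
  have A: "integrable P (\<lambda>s. exp (u * ((h s)\<^sup>2 / \<sigma>\<^sup>2))) \<and> (\<integral>s. exp (u * ((h s)\<^sup>2 / \<sigma>\<^sup>2)) \<partial>P) \<le> exp u"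
    if u: "0 \<le> u" "u \<le> 1" for u
  proof -
    have bnd: "exp (u * ((h s)\<^sup>2 / \<sigma>\<^sup>2)) \<le> exp u * (1 - u) + u * exp (u - 1) * W s" for s
      unfolding W_def by (rule exp_concave_tangent[OF u])
    have Bi: "integrable P (\<lambda>s. exp u * (1 - u) + u * exp (u - 1) * W s)"
      using Wi by auto
    have I: "integrable P (\<lambda>s. exp (u * ((h s)\<^sup>2 / \<sigma>\<^sup>2)))"
      apply (rule Bochner_Integration.integrable_bound[OF Bi])
      using hm apply measurable
      apply (rule AE_I2)
      using bnd[of] u by (auto simp: W_def intro: order.trans[OF _ abs_ge_self])
    have "(\<integral>s. exp (u * ((h s)\<^sup>2 / \<sigma>\<^sup>2)) \<partial>P) \<le> (\<integral>s. exp u * (1 - u) + u * exp (u - 1) * W s \<partial>P)"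
      by (rule Bochner_Integration.integral_mono[OF I Bi]) (rule bnd)
    also have "\<dots> = exp u * (1 - u) + u * exp (u - 1) * integral\<^sup>L P W"
      using Wi by (simp add: prob_space)
    also have "\<dots> \<le> exp u * (1 - u) + u * exp (u - 1) * exp 1"
      using WI u by (intro add_left_mono mult_left_mono) auto
    also have "\<dots> = exp u"
      by (simp add: algebra_simps exp_add[symmetric])
    finally show ?thesis using I by simp
  qed
  have main: "integrable P (\<lambda>s. exp (t * h s)) \<and> (\<integral>s. exp (t * h s) \<partial>P) \<le> exp (t\<^sup>2 * \<sigma>\<^sup>2)"
  proof (cases "t\<^sup>2 * \<sigma>\<^sup>2 \<le> 1")
    case True
    define u where "u = t\<^sup>2 * \<sigma>\<^sup>2"
    have u: "0 \<le> u" "u \<le> 1" using True by (auto simp: u_def)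
    have eq: "u * ((h s)\<^sup>2 / \<sigma>\<^sup>2) = (t * h s)\<^sup>2" for s
      using \<sigma> by (simp add: u_def power_mult_distrib field_simps)
    note Au = A[OF u]
    have Bi: "integrable P (\<lambda>s. t * h s + exp (u * ((h s)\<^sup>2 / \<sigma>\<^sup>2)))"
      using Au hi by auto
    have bnd: "exp (t * h s) \<le> t * h s + exp (u * ((h s)\<^sup>2 / \<sigma>\<^sup>2))" for s
      unfolding eq by (rule exp_le_x_plus_exp_sq)
    have I: "integrable P (\<lambda>s. exp (t * h s))"
      apply (rule Bochner_Integration.integrable_bound[OF Bi])
      using hm apply measurable
      apply (rule AE_I2)
      using bnd by (auto intro: order.trans[OF _ abs_ge_self])
    have "(\<integral>s. exp (t * h s) \<partial>P) \<le> (\<integral>s. t * h s + exp (u * ((h s)\<^sup>2 / \<sigma>\<^sup>2)) \<partial>P)"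
      by (rule Bochner_Integration.integral_mono[OF I Bi]) (rule bnd)
    also have "\<dots> = t * integral\<^sup>L P h + (\<integral>s. exp (u * ((h s)\<^sup>2 / \<sigma>\<^sup>2)) \<partial>P)"
      using Au hi by simp
    also have "\<dots> \<le> exp u" using Au h0 by simp
    finally show ?thesis using I by (simp add: u_def)
  next
    case False
    have u: "0 \<le> (1/2::real)" "(1/2::real) \<le> 1" by auto
    note Au = A[OF u]
    have Bi: "integrable P (\<lambda>s. exp (t\<^sup>2 * \<sigma>\<^sup>2 / 2) * exp (1/2 * ((h s)\<^sup>2 / \<sigma>\<^sup>2)))"
      using Au by auto
    have bnd: "exp (t * h s) \<le> exp (t\<^sup>2 * \<sigma>\<^sup>2 / 2) * exp (1/2 * ((h s)\<^sup>2 / \<sigma>\<^sup>2))" for s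
    proof -
      have "0 \<le> (t * \<sigma> - h s / \<sigma>)\<^sup>2" by simp
      then have "t * h s \<le> t\<^sup>2 * \<sigma>\<^sup>2 / 2 + 1/2 * ((h s)\<^sup>2 / \<sigma>\<^sup>2)"
        using \<sigma> by (simp add: power2_eq_square field_simps)
      then show ?thesis by (simp add: exp_add[symmetric])
    qed
    have I: "integrable P (\<lambda>s. exp (t * h s))"
      apply (rule Bochner_Integration.integrable_bound[OF Bi])
      using hm apply measurable
      apply (rule AE_I2)
      using bnd by auto
    have "(\<integral>s. exp (t * h s) \<partial>P) \<le> (\<integral>s. exp (t\<^sup>2 * \<sigma>\<^sup>2 / 2) * exp (1/2 * ((h s)\<^sup>2 / \<sigma>\<^sup>2)) \<partial>P)"
      by (rule Bochner_Integration.integral_mono[OF I Bi]) (rule bnd)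
    also have "\<dots> = exp (t\<^sup>2 * \<sigma>\<^sup>2 / 2) * (\<integral>s. exp (1/2 * ((h s)\<^sup>2 / \<sigma>\<^sup>2)) \<partial>P)"
      by simp
    also have "\<dots> \<le> exp (t\<^sup>2 * \<sigma>\<^sup>2 / 2) * exp (1/2)"
      using Au by (intro mult_left_mono) auto
    also have "\<dots> \<le> exp (t\<^sup>2 * \<sigma>\<^sup>2)"
      using False by (simp add: exp_add[symmetric])
    finally show ?thesis using I by simp
  qed
  then show ?thesis
    by (subst nn_integral_eq_integral) (auto simp: ennreal_leI)
qed



lemma prod_bound:
  fixes P :: "'b measure" and F :: "nat \<Rightarrow> (nat \<Rightarrow> 'b) \<Rightarrow> ennreal" and c :: "nat \<Rightarrow> ennreal"
  assumes P: "prob_space P"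
   and Fm: "\<And>k m. k < m \<Longrightarrow> F k \<in> borel_measurable (PiM {..<m} (\<lambda>_. P))"
   and Floc: "\<And>k y y'. (\<And>j. j \<le> k \<Longrightarrow> y j = y' j) \<Longrightarrow> F k y = F k y'"
   and Fb: "\<And>k x. x \<in> space (PiM {..<k} (\<lambda>_. P)) \<Longrightarrow> (\<integral>\<^sup>+ s. F k (x(k:=s)) \<partial>P) \<le> c k"
  shows "(\<integral>\<^sup>+ y. (\<Prod>k<n. F k y) \<partial>PiM {..<n} (\<lambda>_. P)) \<le> (\<Prod>k<n. c k)"
proof (induction n)
  case 0
  interpret prob_space "PiM {} (\<lambda>_::nat. P)" by (rule prob_space_PiM) (use P in auto)
  show ?case by (simp add: emeasure_space_1)
next
  case (Suc n)
  interpret product_prob_space "\<lambda>_::nat. P" by (simp add: product_prob_space_def product_prob_space_axioms_def product_sigma_finite_def P prob_space_imp_sigma_finite)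
  have eq: "{..<Suc n} = insert n {..<n}" by auto
  have eqM: "PiM {..<Suc n} (\<lambda>_. P) = PiM (insert n {..<n}) (\<lambda>_. P)" using eq by simp
  have mprod: "(\<lambda>y. \<Prod>k<Suc n. F k y) \<in> borel_measurable (PiM (insert n {..<n}) (\<lambda>_. P))"
    using Fm[of _ "Suc n"] unfolding eq[symmetric] by (intro borel_measurable_prod_ennreal) auto
  have "(\<integral>\<^sup>+ y. (\<Prod>k<Suc n. F k y) \<partial>PiM {..<Suc n} (\<lambda>_. P))
      = (\<integral>\<^sup>+ x. (\<integral>\<^sup>+ s. (\<Prod>k<Suc n. F k (x(n:=s))) \<partial>P) \<partial>PiM {..<n} (\<lambda>_. P))"
    unfolding eqM by (rule product_nn_integral_insert[OF _ _ mprod]) auto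
  also have "\<dots> \<le> (\<integral>\<^sup>+ x. (\<Prod>k<n. F k x) * c n \<partial>PiM {..<n} (\<lambda>_. P))"
  proof (rule nn_integral_mono)
    fix x assume x: "x \<in> space (PiM {..<n} (\<lambda>_. P))"
    have loc: "F k (x(n:=s)) = F k x" if "k < n" for k s
      by (rule Floc) (use that in auto)
    have "(\<Prod>k<Suc n. F k (x(n:=s))) = (\<Prod>k<n. F k x) * F n (x(n:=s))" for s
      using loc by (simp add: prod.lessThan_Suc)
    then have "(\<integral>\<^sup>+ s. (\<Prod>k<Suc n. F k (x(n:=s))) \<partial>P) = (\<Prod>k<n. F k x) * (\<integral>\<^sup>+ s. F n (x(n:=s)) \<partial>P)"
    proof -
      have Fn: "F n \<in> borel_measurable (PiM (insert n {..<n}) (\<lambda>_. P))"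
        using Fm[of n "Suc n"] unfolding eq by simp
      have nn: "n \<notin> {..<n}" by simp
      have m: "(\<lambda>s. F n (x(n:=s))) \<in> borel_measurable P"
        using measurable_compose[OF measurable_component_update[OF x nn] Fn] by simp
      assume "\<And>s. (\<Prod>k<Suc n. F k (x(n:=s))) = (\<Prod>k<n. F k x) * F n (x(n:=s))"
      then show ?thesis by (simp add: nn_integral_cmult[OF m])
    qed
    also have "\<dots> \<le> (\<Prod>k<n. F k x) * c n"
      by (intro mult_left_mono Fb x) simp
    finally show "(\<integral>\<^sup>+ s. (\<Prod>k<Suc n. F k (x(n:=s))) \<partial>P) \<le> (\<Prod>k<n. F k x) * c n" .
  qed
  also have "\<dots> = (\<integral>\<^sup>+ x. (\<Prod>k<n. F k x) \<partial>PiM {..<n} (\<lambda>_. P)) * c n"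
    by (rule nn_integral_multc) (use Fm in \<open>auto intro!: borel_measurable_prod_ennreal\<close>)
  also have "\<dots> \<le> (\<Prod>k<n. c k) * c n"
    by (intro mult_right_mono Suc.IH) simp
  also have "\<dots> = (\<Prod>k<Suc n. c k)" by (simp add: prod.lessThan_Suc)
  finally show ?case .
qed

lemma chernoff_sum:
  fixes P :: "'b measure" and h :: "nat \<Rightarrow> (nat \<Rightarrow> 'b) \<Rightarrow> real" and N :: nat
  assumes P: "prob_space P"
   and hm: "\<And>k m. k < m \<Longrightarrow> h k \<in> borel_measurable (PiM {..<m} (\<lambda>_. P))"
   and hloc: "\<And>k y y'. (\<And>j. j \<le> k \<Longrightarrow> y j = y' j) \<Longrightarrow> h k y = h k y'"
   and hb: "\<And>k x t. x \<in> space (PiM {..<k} (\<lambda>_. P)) \<Longrightarrow>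
              (\<integral>\<^sup>+ s. ennreal (exp (t * h k (x(k:=s)))) \<partial>P) \<le> ennreal (exp (t\<^sup>2 * \<sigma>\<^sup>2))"
   and \<sigma>: "\<sigma> > 0" and N: "N \<ge> 1" and \<Theta>: "\<Theta> > 0"
  shows "emeasure (PiM {..<N} (\<lambda>_. P)) {y \<in> space (PiM {..<N} (\<lambda>_. P)). \<Theta> * \<sigma> * sqrt N \<le> (\<Sum>k<N. h k y)}
          \<le> ennreal (exp (- \<Theta>\<^sup>2 / 4))"
proof -
  define \<Omega> where "\<Omega> = PiM {..<N} (\<lambda>_. P)"
  define t where "t = \<Theta> / (2 * \<sigma> * sqrt N)"
  define a where "a = \<Theta> * \<sigma> * sqrt N"
  have sN: "sqrt (real N) > 0" using N by simp
  have t: "t > 0" unfolding t_def using \<sigma> \<Theta> sN by simp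
  have sm: "(\<lambda>y. \<Sum>k<N. h k y) \<in> borel_measurable \<Omega>"
    unfolding \<Omega>_def using hm by (intro borel_measurable_sum) auto
  have "emeasure \<Omega> {y \<in> space \<Omega>. a \<le> (\<Sum>k<N. h k y)}
     \<le> ennreal (exp (- t * a)) * (\<integral>\<^sup>+ y. ennreal (exp (t * (\<Sum>k<N. h k y))) * indicator (space \<Omega>) y \<partial>\<Omega>)"
    by (rule Chernoff_ineq_nn_integral_ge[OF t]) (use sm in auto)
  also have "(\<integral>\<^sup>+ y. ennreal (exp (t * (\<Sum>k<N. h k y))) * indicator (space \<Omega>) y \<partial>\<Omega>)
      = (\<integral>\<^sup>+ y. (\<Prod>k<N. ennreal (exp (t * h k y))) \<partial>\<Omega>)"
    by (intro nn_integral_cong) (simp add: exp_sum sum_distrib_left prod_ennreal)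
  also have "\<dots> \<le> (\<Prod>k<N. ennreal (exp (t\<^sup>2 * \<sigma>\<^sup>2)))"
    unfolding \<Omega>_def
  proof (rule prod_bound[OF P])
    show "(\<lambda>y. ennreal (exp (t * h k y))) \<in> borel_measurable (PiM {..<m} (\<lambda>_. P))" if "k < m" for k m
      using hm[OF that] by measurable
    show "ennreal (exp (t * h k y)) = ennreal (exp (t * h k y'))" if "\<And>j. j \<le> k \<Longrightarrow> y j = y' j" for k y y'
      using hloc[OF that] by simp
    show "(\<integral>\<^sup>+ s. ennreal (exp (t * h k (x(k:=s)))) \<partial>P) \<le> ennreal (exp (t\<^sup>2 * \<sigma>\<^sup>2))"
      if "x \<in> space (PiM {..<k} (\<lambda>_. P))" for k x
      by (rule hb[OF that])
  qed
  also have "\<dots> = ennreal (exp (N * (t\<^sup>2 * \<sigma>\<^sup>2)))"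
    by (simp add: ennreal_power exp_of_nat_mult)
  finally have "emeasure \<Omega> {y \<in> space \<Omega>. a \<le> (\<Sum>k<N. h k y)}
      \<le> ennreal (exp (- t * a)) * ennreal (exp (N * (t\<^sup>2 * \<sigma>\<^sup>2)))"
    by (simp add: mult_left_mono)
  also have "\<dots> = ennreal (exp (- t * a) * exp (N * (t\<^sup>2 * \<sigma>\<^sup>2)))"
    by (simp add: ennreal_mult)
  also have "exp (- t * a) * exp (N * (t\<^sup>2 * \<sigma>\<^sup>2)) = exp (- t * a + N * (t\<^sup>2 * \<sigma>\<^sup>2))"
    by (simp only: exp_add)
  also have "- t * a + N * (t\<^sup>2 * \<sigma>\<^sup>2) = - \<Theta>\<^sup>2 / 4"
    using \<sigma> sN unfolding t_def a_def
    by (simp add: field_simps power2_eq_square)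
  finally show ?thesis unfolding \<Omega>_def a_def .
qed



lemma null_bound:
  fixes P :: "'b measure" and B :: "(nat \<Rightarrow> 'b) \<Rightarrow> bool"
  assumes P: "prob_space P" and kN: "k < N"
   and Bm: "\<And>m. k < m \<Longrightarrow> Measurable.pred (PiM {..<m} (\<lambda>_. P)) B"
   and Bloc: "\<And>y y'. (\<And>j. j \<le> k \<Longrightarrow> y j = y' j) \<Longrightarrow> B y = B y'"
   and Bnull: "\<And>x. x \<in> space (PiM {..<k} (\<lambda>_. P)) \<Longrightarrow> AE s in P. \<not> B (x(k:=s))"
  shows "AE y in PiM {..<N} (\<lambda>_. P). \<not> B y"
proof -
  define F where "F j y = (if j = k then (if B y then 1 else 0) else (1::ennreal))" for j y
  define c where "c j = (if j = k then 0 else (1::ennreal))" for j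
  have "(\<integral>\<^sup>+ y. (\<Prod>j<N. F j y) \<partial>PiM {..<N} (\<lambda>_. P)) \<le> (\<Prod>j<N. c j)"
  proof (rule prod_bound[OF P])
    show "F j \<in> borel_measurable (PiM {..<m} (\<lambda>_. P))" if "j < m" for j m
      unfolding F_def using Bm[of m] that by (cases "j = k") auto
    show "F j y = F j y'" if "\<And>i. i \<le> j \<Longrightarrow> y i = y' i" for j y y'
      unfolding F_def using Bloc[of y y'] that by auto
    show "(\<integral>\<^sup>+ s. F j (x(j:=s)) \<partial>P) \<le> c j" if x: "x \<in> space (PiM {..<j} (\<lambda>_. P))" for j x
    proof (cases "j = k")
      case True
      have "(\<integral>\<^sup>+ s. F j (x(j:=s)) \<partial>P) = (\<integral>\<^sup>+ s. 0 \<partial>P)"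
        using Bnull[of x] x True by (intro nn_integral_cong_AE) (auto simp: F_def elim!: AE_mp)
      then show ?thesis by (simp add: c_def True)
    next
      case False
      interpret prob_space P by (rule P)
      show ?thesis using False by (simp add: F_def c_def emeasure_space_1)
    qed
  qed
  also have "(\<Prod>j<N. c j) = 0" using kN by (auto simp: c_def)
  also have "(\<lambda>y. \<Prod>j<N. F j y) = (\<lambda>y. if B y then 1 else 0)"
  proof
    fix y
    have "(\<Prod>j<N. F j y) = F k y * (\<Prod>j\<in>{..<N} - {k}. F j y)"
      using kN by (subst prod.remove[of _ k]) auto
    also have "(\<Prod>j\<in>{..<N} - {k}. F j y) = 1" by (intro prod.neutral) (auto simp: F_def)
    finally show "(\<Prod>j<N. F j y) = (if B y then 1 else 0)" by (simp add: F_def)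
  qed
  finally have "(\<integral>\<^sup>+ y. (if B y then 1 else 0) \<partial>PiM {..<N} (\<lambda>_. P)) = 0" by simp
  moreover have "(\<lambda>y. if B y then 1 else 0::ennreal) \<in> borel_measurable (PiM {..<N} (\<lambda>_. P))"
    using Bm[OF kN] by measurable
  ultimately have "AE y in PiM {..<N} (\<lambda>_. P). (if B y then 1 else 0::ennreal) = 0"
    by (simp add: nn_integral_0_iff_AE)
  then show ?thesis by (auto elim!: AE_mp)
qed

lemma bounded_subg:
  fixes P :: "'b measure" and h :: "'b \<Rightarrow> real"
  assumes P: "prob_space P" and c: "c > 0" and hb: "AE s in P. \<bar>h s\<bar> \<le> c"
  shows "(\<integral>\<^sup>+ s. ennreal (exp ((h s)\<^sup>2 / c\<^sup>2)) \<partial>P) \<le> ennreal (exp 1)"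
proof -
  interpret prob_space P by (rule P)
  have "(\<integral>\<^sup>+ s. ennreal (exp ((h s)\<^sup>2 / c\<^sup>2)) \<partial>P) \<le> (\<integral>\<^sup>+ s. ennreal (exp 1) \<partial>P)"
  proof (rule nn_integral_mono_AE)
    show "AE s in P. ennreal (exp ((h s)\<^sup>2 / c\<^sup>2)) \<le> ennreal (exp 1)"
      using hb
    proof (rule AE_mp, intro AE_I2 impI)
      fix s assume hs: "\<bar>h s\<bar> \<le> c"
      have "(h s)\<^sup>2 \<le> c\<^sup>2" using power_mono[OF hs abs_ge_zero, of 2] by simp
      then have "(h s)\<^sup>2 / c\<^sup>2 \<le> 1" using c by simp
      then show "ennreal (exp ((h s)\<^sup>2 / c\<^sup>2)) \<le> ennreal (exp 1)" by (intro ennreal_leI) simp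
    qed
  qed
  also have "\<dots> = ennreal (exp 1)" by (simp add: emeasure_space_1)
  finally show ?thesis .
qed

lemma rsa_telescope:
  fixes X :: "'a::euclidean_space set" and z v :: "nat \<Rightarrow> 'a"
  assumes X: "convex X" "closed X" "X \<noteq> {}" and xs: "xs \<in> X"
    and z: "\<And>k. z (Suc k) = closest_point X (z k - \<gamma> *\<^sub>R v k)"
  shows "2 * \<gamma> * (\<Sum>k<n. inner (v k) (z k - xs)) \<le> (norm (z 0 - xs))\<^sup>2 - (norm (z n - xs))\<^sup>2 + \<gamma>\<^sup>2 * (\<Sum>k<n. (norm (v k))\<^sup>2)"
proof (induction n)
  case 0
  then show ?case by simp
next
  case (Suc n)
  have "norm (z (Suc n) - xs) \<le> norm ((z n - \<gamma> *\<^sub>R v n) - xs)"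
    using closest_point_lipschitz[OF X, of "z n - \<gamma> *\<^sub>R v n" xs] closest_point_self[OF xs]
    by (simp add: z dist_norm)
  then have "(norm (z (Suc n) - xs))\<^sup>2 \<le> (norm ((z n - xs) - \<gamma> *\<^sub>R v n))\<^sup>2"
    by (simp add: power_mono algebra_simps)
  also have "\<dots> = (norm (z n - xs))\<^sup>2 - 2 * \<gamma> * inner (v n) (z n - xs) + \<gamma>\<^sup>2 * (norm (v n))\<^sup>2"
    by (simp only: power2_norm_eq_inner) (simp add: inner_diff_left inner_diff_right inner_commute algebra_simps power2_eq_square)
  finally show ?case using Suc.IH by (simp add: algebra_simps)
qed



theorem corollary1:
  fixes M :: "'w measure" and S :: "'b measure"
    and xi :: "nat \<Rightarrow> 'w \<Rightarrow> 'b"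
    and X :: "'a::euclidean_space set"
    and g :: "'a \<Rightarrow> 'b \<Rightarrow> real" and G :: "'a \<Rightarrow> 'b \<Rightarrow> 'a"
    and f :: "'a \<Rightarrow> real" and f' :: "'a \<Rightarrow> 'a"
    and x1 xs :: 'a and L M1 M2 \<Theta>1 \<Theta>2 \<Theta>3 :: real and N :: nat
  defines "P \<equiv> distr M S (xi 0)"
  defines "DX \<equiv> diam_from X x1"
  defines "\<gamma> \<equiv> rsa_step DX M2 L N"
  assumes prob: "prob_space M"
    and rv: "\<And>i. xi i \<in> measurable M S"
    and indep: "prob_space.indep_vars M (\<lambda>_. S) xi UNIV"
    and ident: "\<And>i. distr M S (xi i) = distr M S (xi 0)"
    and X: "X \<noteq> {}" "closed X" "bounded X" "convex X" and x1: "x1 \<in> X"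
    and g_meas: "(\<lambda>(x, s). g x s) \<in> borel_measurable (borel \<Otimes>\<^sub>M S)"
    and G_meas: "(\<lambda>(x, s). G x s) \<in> borel_measurable (borel \<Otimes>\<^sub>M S)"
    and g_conv: "\<And>s. s \<in> space S \<Longrightarrow> convex_on X (\<lambda>x. g x s)"
    and G_sub: "\<And>x s. x \<in> X \<Longrightarrow> s \<in> space S \<Longrightarrow> is_subgradient X (\<lambda>y. g y s) x (G x s)"
    and g_int: "\<And>x. x \<in> X \<Longrightarrow> integrable P (g x)"
    and G_int: "\<And>x. x \<in> X \<Longrightarrow> integrable P (G x)"
    and f_def: "\<And>x. x \<in> X \<Longrightarrow> f x = (\<integral>s. g x s \<partial>P)"
    and f'_def: "\<And>x. x \<in> X \<Longrightarrow> f' x = (\<integral>s. G x s \<partial>P)"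
    and f'_sub: "\<And>x. x \<in> X \<Longrightarrow> is_subgradient X f x (f' x)"
    and f_conv: "convex_on X f"
    and f_lip: "\<exists>C. C-lipschitz_on X f"
    and xs: "xs \<in> X" "\<And>x. x \<in> X \<Longrightarrow> f xs \<le> f x"
    and M1_pos: "M1 > 0" and M2_nn: "M2 \<ge> 0" and L_nn: "L \<ge> 0" and sq_pos: "M2\<^sup>2 + L\<^sup>2 > 0"
    and A1: "\<And>x. x \<in> X \<Longrightarrow> norm (f' x) \<le> L"
    and A3a: "\<And>x. x \<in> X \<Longrightarrow> (\<integral>\<^sup>+ s. ennreal ((g x s - f x)\<^sup>2) \<partial>P) \<le> ennreal (M1\<^sup>2)"
    and A3b: "\<And>x. x \<in> X \<Longrightarrow> (\<integral>\<^sup>+ s. ennreal ((norm (G x s - f' x))\<^sup>2) \<partial>P) \<le> ennreal (M2\<^sup>2)"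
    and A5a: "\<And>x. x \<in> X \<Longrightarrow> (\<integral>\<^sup>+ s. ennreal (exp ((g x s - f x)\<^sup>2 / M1\<^sup>2)) \<partial>P) \<le> ennreal (exp 1)"
    and A5b: "\<And>x. x \<in> X \<Longrightarrow> (AE s in P. norm (G x s - f' x) \<le> M2)"
    and N: "N \<ge> 1"
    and \<Theta>: "\<Theta>1 > 0" "\<Theta>2 > 0" "\<Theta>3 > 0"
  shows "measure M {\<omega> \<in> space M.
            gN X g G \<gamma> x1 xi N \<omega> - b_bnd \<Theta>2 DX M1 M2 L N - a_bnd \<Theta>3 M1 N \<le> f xs \<and>
            f xs \<le> gN X g G \<gamma> x1 xi N \<omega> + a_bnd \<Theta>1 M1 N}
         \<ge> 1 - exp (- \<Theta>1\<^sup>2 / 4) - exp (1 - \<Theta>2\<^sup>2) - exp (- \<Theta>2\<^sup>2 / 4) - exp (- \<Theta>3\<^sup>2 / 4)"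
proof -
  interpret M: prob_space M by (rule prob)
  have sets_P: "sets P = sets S" unfolding P_def by simp
  have space_P: "space P = space S" unfolding P_def by simp
  have Pprob: "prob_space P" unfolding P_def by (rule M.prob_space_distr[OF rv])
  interpret P: prob_space P by (rule Pprob)
  define \<Omega> where "\<Omega> = PiM {..<N} (\<lambda>_. P)"
  have \<Omega>prob: "prob_space \<Omega>" unfolding \<Omega>_def by (rule prob_space_PiM) (use Pprob in auto)
  interpret \<Omega>: prob_space \<Omega> by (rule \<Omega>prob)
  define s where "s = M2\<^sup>2 + L\<^sup>2"
  have s: "s > 0" using sq_pos by (simp add: s_def)
  have sN: "sqrt (real N) > 0" using N by simp
  have bdd: "bdd_above ((\<lambda>x. norm (x - x1)) ` X)"
  proof -
    obtain B where B: "\<forall>x\<in>X. norm x \<le> B" using X(3) by (auto simp: bounded_iff)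
    have "norm (x - x1) \<le> B + norm x1" if "x \<in> X" for x
      using B that norm_triangle_ineq4[of x x1] by fastforce
    then show ?thesis by (intro bdd_aboveI[where M="B + norm x1"]) auto
  qed
  have DXb: "norm (x - x1) \<le> DX" if "x \<in> X" for x
    unfolding DX_def diam_from_def using bdd that by (intro cSup_upper) auto
  have DX0: "0 \<le> DX" using DXb[OF x1] by simp
  have D2: "norm (x - xs) \<le> 2 * DX" if "x \<in> X" for x
    using DXb[OF that] DXb[OF xs(1)] norm_triangle_ineq4[of "x - x1" "xs - x1"] by simp
  define xk where "xk k y = rsa_iter X G \<gamma> x1 (\<lambda>j y. y j) k y" for k and y :: "nat \<Rightarrow> 'b"
  have xk0: "xk 0 y = x1" for y by (simp add: xk_def)
  have xkS: "xk (Suc k) y = closest_point X (xk k y - \<gamma> *\<^sub>R G (xk k y) (y k))" for k y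
    by (simp add: xk_def)
  have xkX: "xk k y \<in> X" for k y
    by (cases k) (auto simp: xk0 xkS x1 closest_point_in_set[OF X(2) X(1)])
  have xkloc: "xk k y = xk k y'" if "\<And>j. j < k \<Longrightarrow> y j = y' j" for k y y'
    using that
  proof (induction k)
    case 0 then show ?case by (simp add: xk0)
  next
    case (Suc k)
    have "xk k y = xk k y'" using Suc.prems by (intro Suc.IH) auto
    moreover have "y k = y' k" using Suc.prems by auto
    ultimately show ?case by (simp add: xkS)
  qed
  have xkupd: "xk k (x(k:=t)) = xk k x" for k x t by (rule xkloc) auto
  have Gm: "(\<lambda>(x, s). G x s) \<in> borel_measurable (borel \<Otimes>\<^sub>M P)"
    using G_meas by (subst measurable_cong_sets[OF sets_pair_measure_cong[OF refl sets_P] refl])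
  have gm: "(\<lambda>(x, s). g x s) \<in> borel_measurable (borel \<Otimes>\<^sub>M P)"
    using g_meas by (subst measurable_cong_sets[OF sets_pair_measure_cong[OF refl sets_P] refl])
  have cpm: "closest_point X \<in> borel_measurable borel"
    by (intro borel_measurable_continuous_onI continuous_on_closest_point X)
  have xkm: "(\<lambda>y. xk k y) \<in> borel_measurable (PiM I (\<lambda>_. P))" if "{..<k} \<subseteq> I" for k I
    using that
  proof (induction k)
    case 0 then show ?case by (simp add: xk0)
  next
    case (Suc k)
    have kI: "k \<in> I" using Suc.prems by auto
    have "{..<k} \<subseteq> I" using Suc.prems by (auto simp: subset_eq)
    then have IH: "(\<lambda>y. xk k y) \<in> borel_measurable (PiM I (\<lambda>_. P))" by (rule Suc.IH)
    have yk: "(\<lambda>y. y k) \<in> measurable (PiM I (\<lambda>_. P)) P"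
      using kI by (rule measurable_component_singleton)
    have Gk: "(\<lambda>y. G (xk k y) (y k)) \<in> borel_measurable (PiM I (\<lambda>_. P))"
      using measurable_compose[OF measurable_Pair[OF IH yk] Gm] by simp
    have "(\<lambda>y. xk k y - \<gamma> *\<^sub>R G (xk k y) (y k)) \<in> borel_measurable (PiM I (\<lambda>_. P))"
      using IH Gk by (intro borel_measurable_diff borel_measurable_scaleR) auto
    from measurable_compose[OF this cpm] show ?case by (simp add: xkS)
  qed
  define Fg where "Fg z = (\<integral>s. g z s \<partial>P)" for z
  define Fg' where "Fg' z = (\<integral>s. G z s \<partial>P)" for z
  have Fgm: "Fg \<in> borel_measurable borel"
    unfolding Fg_def using P.borel_measurable_lebesgue_integral[OF gm] by simp
  have Fg'm: "Fg' \<in> borel_measurable borel"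
    unfolding Fg'_def using P.borel_measurable_lebesgue_integral[OF Gm] by simp
  have fF: "f z = Fg z" if "z \<in> X" for z using f_def[OF that] by (simp add: Fg_def)
  have fF': "f' z = Fg' z" if "z \<in> X" for z using f'_def[OF that] by (simp add: Fg'_def)
  define gk where "gk k y = g (xk k y) (y k)" for k y
  define Gk where "Gk k y = G (xk k y) (y k)" for k y
  define \<delta> where "\<delta> k y = gk k y - Fg (xk k y)" for k y
  define Yv where "Yv k y = - inner (Gk k y - Fg' (xk k y)) (xk k y - xs)" for k y
  have xmm: "(\<lambda>y. xk k y) \<in> borel_measurable (PiM {..<m} (\<lambda>_. P))" if "k < m" for k m
    using that by (intro xkm) auto
  have ykm: "(\<lambda>y. y k) \<in> measurable (PiM {..<m} (\<lambda>_. P)) P" if "k < m" for k m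
    using that by (intro measurable_component_singleton) auto
  have gkm: "gk k \<in> borel_measurable (PiM {..<m} (\<lambda>_. P))" if "k < m" for k m
    using measurable_compose[OF measurable_Pair[OF xmm[OF that] ykm[OF that]] gm]
    by (simp add: gk_def[abs_def])
  have Gkm: "Gk k \<in> borel_measurable (PiM {..<m} (\<lambda>_. P))" if "k < m" for k m
    using measurable_compose[OF measurable_Pair[OF xmm[OF that] ykm[OF that]] Gm]
    by (simp add: Gk_def[abs_def])
  have Fgxm: "(\<lambda>y. Fg (xk k y)) \<in> borel_measurable (PiM {..<m} (\<lambda>_. P))" if "k < m" for k m
    using measurable_compose[OF xmm[OF that] Fgm] by simp
  have Fg'xm: "(\<lambda>y. Fg' (xk k y)) \<in> borel_measurable (PiM {..<m} (\<lambda>_. P))" if "k < m" for k m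
    using measurable_compose[OF xmm[OF that] Fg'm] by simp
  have \<delta>m: "\<delta> k \<in> borel_measurable (PiM {..<m} (\<lambda>_. P))" if "k < m" for k m
    unfolding \<delta>_def[abs_def] using gkm[OF that] Fgxm[OF that] by (rule borel_measurable_diff)
  have Yvm: "Yv k \<in> borel_measurable (PiM {..<m} (\<lambda>_. P))" if "k < m" for k m
    unfolding Yv_def[abs_def] using Gkm[OF that] Fg'xm[OF that] xmm[OF that] by measurable
  have Dm: "(\<lambda>y. norm (Gk k y - Fg' (xk k y))) \<in> borel_measurable (PiM {..<m} (\<lambda>_. P))" if "k < m" for k m
    using Gkm[OF that] Fg'xm[OF that] by measurable
  have yeq: "xk k y = xk k y' \<and> y k = y' k" if "\<And>j. j \<le> k \<Longrightarrow> y j = y' j" for k y y'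
    using that by (auto intro!: xkloc)
  have \<delta>loc: "\<delta> k y = \<delta> k y'" if "\<And>j. j \<le> k \<Longrightarrow> y j = y' j" for k y y'
    using yeq[of k y y', OF that] by (simp add: \<delta>_def gk_def)
  have Yvloc: "Yv k y = Yv k y'" if "\<And>j. j \<le> k \<Longrightarrow> y j = y' j" for k y y'
    using yeq[of k y y', OF that] by (simp add: Yv_def Gk_def)
  have \<delta>upd: "\<delta> k (x(k:=t)) = g (xk k x) t - Fg (xk k x)" for k x t
    by (simp add: \<delta>_def gk_def xkupd)
  have Yvupd: "Yv k (x(k:=t)) = - inner (G (xk k x) t - Fg' (xk k x)) (xk k x - xs)" for k x t
    by (simp add: Yv_def Gk_def xkupd)
  have mgf_delta: "(\<integral>\<^sup>+ s. ennreal (exp (t * (g z s - Fg z))) \<partial>P) \<le> ennreal (exp (t\<^sup>2 * M1\<^sup>2))"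
    if z: "z \<in> X" for z t
  proof (rule subg_mgf[OF Pprob])
    show "(\<lambda>s. g z s - Fg z) \<in> borel_measurable P" using g_int[OF z] by auto
    show "integrable P (\<lambda>s. g z s - Fg z)" using g_int[OF z] by auto
    show "(\<integral>s. g z s - Fg z \<partial>P) = 0" using g_int[OF z] by (simp add: Fg_def P.prob_space)
    show "M1 > 0" by (rule M1_pos)
    show "(\<integral>\<^sup>+ s. ennreal (exp ((g z s - Fg z)\<^sup>2 / M1\<^sup>2)) \<partial>P) \<le> ennreal (exp 1)"
      using A5a[OF z] fF[OF z] by simp
  qed
  define \<sigma> where "\<sigma> = 2 * DX * M2"
  have \<sigma>0: "0 \<le> \<sigma>" using DX0 M2_nn by (simp add: \<sigma>_def)
  have Ybnd: "AE s in P. \<bar>- inner (G z s - Fg' z) (z - xs)\<bar> \<le> \<sigma>" if z: "z \<in> X" for z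
    using A5b[OF z]
  proof (rule AE_mp, intro AE_I2 impI)
    fix s assume "norm (G z s - f' z) \<le> M2"
    then have a: "norm (G z s - Fg' z) \<le> M2" using fF'[OF z] by simp
    have "\<bar>- inner (G z s - Fg' z) (z - xs)\<bar> \<le> norm (G z s - Fg' z) * norm (z - xs)"
      using Cauchy_Schwarz_ineq2 by simp
    also have "\<dots> \<le> M2 * (2 * DX)" using a D2[OF z] M2_nn by (intro mult_mono) auto
    finally show "\<bar>- inner (G z s - Fg' z) (z - xs)\<bar> \<le> \<sigma>" by (simp add: \<sigma>_def mult_ac)
  qed
  have mgf_Y: "(\<integral>\<^sup>+ s. ennreal (exp (t * (- inner (G z s - Fg' z) (z - xs)))) \<partial>P) \<le> ennreal (exp (t\<^sup>2 * \<sigma>\<^sup>2))"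
    if z: "z \<in> X" and \<sigma>p: "\<sigma> > 0" for z t
  proof (rule subg_mgf[OF Pprob])
    have Gi: "integrable P (G z)" by (rule G_int[OF z])
    show "integrable P (\<lambda>s. - inner (G z s - Fg' z) (z - xs))" using Gi by auto
    then show "(\<lambda>s. - inner (G z s - Fg' z) (z - xs)) \<in> borel_measurable P" by auto
    have "(\<lambda>s. - inner (G z s - Fg' z) (z - xs)) = (\<lambda>s. inner (Fg' z) (z - xs) - inner (G z s) (z - xs))"
      by (simp add: inner_diff_left fun_eq_iff)
    then show "(\<integral>s. - inner (G z s - Fg' z) (z - xs) \<partial>P) = 0"
      using Gi by (simp add: Fg'_def P.prob_space)
    show "\<sigma> > 0" by (rule \<sigma>p)
    show "(\<integral>\<^sup>+ s. ennreal (exp ((- inner (G z s - Fg' z) (z - xs))\<^sup>2 / \<sigma>\<^sup>2)) \<partial>P) \<le> ennreal (exp 1)"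
      by (rule bounded_subg[OF Pprob \<sigma>p Ybnd[OF z]])
  qed
  define B1 where "B1 = {y \<in> space \<Omega>. \<Theta>1 * M1 * sqrt N \<le> (\<Sum>k<N. - \<delta> k y)}"
  define B3 where "B3 = {y \<in> space \<Omega>. \<Theta>3 * M1 * sqrt N \<le> (\<Sum>k<N. \<delta> k y)}"
  define B2 where "B2 = (if \<sigma> > 0 then {y \<in> space \<Omega>. \<Theta>2 * \<sigma> * sqrt N \<le> (\<Sum>k<N. Yv k y)} else {})"
  define Z where "Z = (\<Union>k<N. {y \<in> space \<Omega>. M2 < norm (Gk k y - Fg' (xk k y))})"
  have summ: "(\<lambda>y. \<Sum>k<N. h k y) \<in> borel_measurable \<Omega>"
    if "\<And>k. k < N \<Longrightarrow> h k \<in> borel_measurable \<Omega>" for h :: "nat \<Rightarrow> (nat \<Rightarrow> 'b) \<Rightarrow> real"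
    using that by (intro borel_measurable_sum) auto
  have B1s: "B1 \<in> sets \<Omega>"
  proof -
    have "(\<lambda>y. \<Sum>k<N. - \<delta> k y) \<in> borel_measurable \<Omega>"
      by (rule summ) (use \<delta>m in \<open>auto simp: \<Omega>_def\<close>)
    then show ?thesis unfolding B1_def by measurable
  qed
  have B3s: "B3 \<in> sets \<Omega>"
  proof -
    have "(\<lambda>y. \<Sum>k<N. \<delta> k y) \<in> borel_measurable \<Omega>"
      by (rule summ) (use \<delta>m in \<open>auto simp: \<Omega>_def\<close>)
    then show ?thesis unfolding B3_def by measurable
  qed
  have B2s: "B2 \<in> sets \<Omega>"
  proof -
    have "(\<lambda>y. \<Sum>k<N. Yv k y) \<in> borel_measurable \<Omega>"
      by (rule summ) (use Yvm in \<open>auto simp: \<Omega>_def\<close>)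
    then have "{y \<in> space \<Omega>. \<Theta>2 * \<sigma> * sqrt N \<le> (\<Sum>k<N. Yv k y)} \<in> sets \<Omega>" by measurable
    then show ?thesis unfolding B2_def by simp
  qed
  have Zs: "Z \<in> sets \<Omega>"
    unfolding Z_def
  proof (intro sets.finite_UN)
    fix k assume "k \<in> {..<N}"
    then have "(\<lambda>y. norm (Gk k y - Fg' (xk k y))) \<in> borel_measurable \<Omega>"
      using Dm unfolding \<Omega>_def by auto
    then show "{y \<in> space \<Omega>. M2 < norm (Gk k y - Fg' (xk k y))} \<in> sets \<Omega>" by measurable
  qed auto
  have B1p: "measure \<Omega> B1 \<le> exp (- \<Theta>1\<^sup>2 / 4)"
  proof -
    have "emeasure \<Omega> B1 \<le> ennreal (exp (- \<Theta>1\<^sup>2 / 4))"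
      unfolding B1_def \<Omega>_def
    proof (rule chernoff_sum[OF Pprob _ _ _ M1_pos N \<Theta>(1)])
      show "(\<lambda>y. - \<delta> k y) \<in> borel_measurable (PiM {..<m} (\<lambda>_. P))" if "k < m" for k m
        using \<delta>m[OF that] by measurable
      show "- \<delta> k y = - \<delta> k y'" if "\<And>j. j \<le> k \<Longrightarrow> y j = y' j" for k y y'
        using \<delta>loc[OF that] by simp
      show "(\<integral>\<^sup>+ s. ennreal (exp (t * - \<delta> k (x(k := s)))) \<partial>P) \<le> ennreal (exp (t\<^sup>2 * M1\<^sup>2))" for k x t
        using mgf_delta[OF xkX[of k x], of "- t"] by (simp add: \<delta>upd algebra_simps)
    qed
    then show ?thesis by (simp add: \<Omega>.emeasure_eq_measure ennreal_le_iff)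
  qed
  have B3p: "measure \<Omega> B3 \<le> exp (- \<Theta>3\<^sup>2 / 4)"
  proof -
    have "emeasure \<Omega> B3 \<le> ennreal (exp (- \<Theta>3\<^sup>2 / 4))"
      unfolding B3_def \<Omega>_def
    proof (rule chernoff_sum[OF Pprob _ _ _ M1_pos N \<Theta>(3)])
      show "\<delta> k \<in> borel_measurable (PiM {..<m} (\<lambda>_. P))" if "k < m" for k m
        using \<delta>m[OF that] by measurable
      show "\<delta> k y = \<delta> k y'" if "\<And>j. j \<le> k \<Longrightarrow> y j = y' j" for k y y'
        using \<delta>loc[OF that] by simp
      show "(\<integral>\<^sup>+ s. ennreal (exp (t * \<delta> k (x(k := s)))) \<partial>P) \<le> ennreal (exp (t\<^sup>2 * M1\<^sup>2))" for k x t
        using mgf_delta[OF xkX[of k x], of t] by (simp add: \<delta>upd)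
    qed
    then show ?thesis by (simp add: \<Omega>.emeasure_eq_measure ennreal_le_iff)
  qed
  have B2p: "measure \<Omega> B2 \<le> exp (- \<Theta>2\<^sup>2 / 4)"
  proof (cases "\<sigma> > 0")
    case True
    have B2e: "B2 = {y \<in> space \<Omega>. \<Theta>2 * \<sigma> * sqrt N \<le> (\<Sum>k<N. Yv k y)}"
      using True by (simp add: B2_def)
    have "emeasure \<Omega> B2 \<le> ennreal (exp (- \<Theta>2\<^sup>2 / 4))"
      unfolding B2e \<Omega>_def
    proof (rule chernoff_sum[OF Pprob _ _ _ True N \<Theta>(2)])
      show "Yv k \<in> borel_measurable (PiM {..<m} (\<lambda>_. P))" if "k < m" for k m
        using Yvm[OF that] by measurable
      show "Yv k y = Yv k y'" if "\<And>j. j \<le> k \<Longrightarrow> y j = y' j" for k y y'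
        using Yvloc[OF that] by simp
      show "(\<integral>\<^sup>+ s. ennreal (exp (t * Yv k (x(k := s)))) \<partial>P) \<le> ennreal (exp (t\<^sup>2 * \<sigma>\<^sup>2))" for k x t
        using mgf_Y[OF xkX[of k x] True, of t] by (simp add: Yvupd)
    qed
    then show ?thesis by (simp add: \<Omega>.emeasure_eq_measure ennreal_le_iff)
  next
    case False
    then show ?thesis by (simp add: B2_def)
  qed
  have Zp: "measure \<Omega> Z = 0"
  proof -
    have AEk: "AE y in \<Omega>. \<not> M2 < norm (Gk k y - Fg' (xk k y))" if k: "k < N" for k
      unfolding \<Omega>_def
    proof (rule null_bound[OF Pprob k])
      show "Measurable.pred (PiM {..<m} (\<lambda>_. P)) (\<lambda>y. M2 < norm (Gk k y - Fg' (xk k y)))" if "k < m" for m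
        using Dm[OF that] by measurable
      show "(M2 < norm (Gk k y - Fg' (xk k y))) = (M2 < norm (Gk k y' - Fg' (xk k y')))"
        if "\<And>j. j \<le> k \<Longrightarrow> y j = y' j" for y y'
        using yeq[of k y y', OF that] by (simp add: Gk_def)
      show "AE s in P. \<not> M2 < norm (Gk k (x(k := s)) - Fg' (xk k (x(k := s))))" for x
      proof -
        have e: "Gk k (x(k := s)) - Fg' (xk k (x(k := s))) = G (xk k x) s - f' (xk k x)" for s
          using fF'[OF xkX[of k x]] by (simp add: Gk_def xkupd)
        show ?thesis unfolding e using A5b[OF xkX[of k x]] by (simp add: not_less)
      qed
    qed
    have AEall: "AE y in \<Omega>. \<forall>k\<in>{..<N}. \<not> M2 < norm (Gk k y - Fg' (xk k y))"
      by (rule AE_ball_countable') (use AEk in auto)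
    have eqZ: "{y \<in> space \<Omega>. \<not> (\<forall>k\<in>{..<N}. \<not> M2 < norm (Gk k y - Fg' (xk k y)))} = Z"
      by (auto simp: Z_def)
    have "emeasure \<Omega> Z = 0" using AE_iff_measurable[OF Zs eqZ] AEall by simp
    then show ?thesis by (simp add: \<Omega>.emeasure_eq_measure)
  qed
  define r where "r = sqrt (2 * s)"
  define q where "q = sqrt (real N)"
  have r: "r > 0" "r * r = 2 * s" using s by (auto simp: r_def)
  have q: "q > 0" "q * q = real N" using N by (auto simp: q_def)
  have Npos: "real N > 0" using N by simp
  have \<gamma>e: "\<gamma> = DX / (r * q)" by (simp add: \<gamma>_def rsa_step_def r_def q_def s_def)
  define a1 where "a1 = a_bnd \<Theta>1 M1 N"
  define a3 where "a3 = a_bnd \<Theta>3 M1 N"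
  define b where "b = b_bnd \<Theta>2 DX M1 M2 L N"
  have a1e: "real N * a1 = \<Theta>1 * M1 * q"
  proof -
    have "real N * a1 = (q * q) * (\<Theta>1 * M1 / q)" by (simp add: a1_def a_bnd_def q(2) flip: q_def)
    then show ?thesis using q(1) by simp
  qed
  have a3e: "real N * a3 = \<Theta>3 * M1 * q"
  proof -
    have "real N * a3 = (q * q) * (\<Theta>3 * M1 / q)" by (simp add: a3_def a_bnd_def q(2) flip: q_def)
    then show ?thesis using q(1) by simp
  qed
  have bN: "real N * b = q * (DX * (M2\<^sup>2 + 2 * L\<^sup>2) / r + \<Theta>2 * (DX * M2\<^sup>2 / r + 2 * DX * M2))"
  proof -
    have "real N * b = (q * q) * ((DX * (M2\<^sup>2 + 2 * L\<^sup>2) / r + \<Theta>2 * (DX * M2\<^sup>2 / r + 2 * DX * M2 + M1 - M1)) / q)"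
      by (simp add: b_def b_bnd_def K1_def K2_def q(2) r_def s_def flip: q_def)
    then show ?thesis using q(1) by simp
  qed
  have key: "q * DX * r + \<Theta>2 * \<sigma> * q \<le> real N * b" if T2: "\<Theta>2 \<ge> 1"
  proof -
    have k1: "DX * (M2\<^sup>2 + 2 * L\<^sup>2) / r + DX * M2\<^sup>2 / r = DX * r"
    proof -
      have "DX * (M2\<^sup>2 + 2 * L\<^sup>2) / r + DX * M2\<^sup>2 / r = DX * (2 * s) / r"
        by (simp add: s_def add_divide_distrib[symmetric] algebra_simps)
      also have "\<dots> = DX * r" using r by (simp flip: r(2))
      finally show ?thesis .
    qed
    have c0: "0 \<le> DX * M2\<^sup>2 / r" using DX0 r by simp
    have "DX * M2\<^sup>2 / r \<le> \<Theta>2 * (DX * M2\<^sup>2 / r)" using mult_right_mono[OF T2 c0] by (simp only: mult_1)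
    then have "DX * r + \<Theta>2 * \<sigma> \<le> DX * (M2\<^sup>2 + 2 * L\<^sup>2) / r + \<Theta>2 * (DX * M2\<^sup>2 / r + 2 * DX * M2)"
      using k1 by (simp add: \<sigma>_def algebra_simps)
    then have "q * (DX * r + \<Theta>2 * \<sigma>) \<le> real N * b" unfolding bN using q(1) by (intro mult_left_mono) auto
    then show ?thesis by (simp add: algebra_simps)
  qed
  have det: "real N * f xs \<le> (\<Sum>k<N. gk k y) + real N * a1 \<and> (\<Sum>k<N. gk k y) \<le> real N * (f xs + b + a3)"
    if y: "y \<in> space \<Omega>" and T2: "\<Theta>2 \<ge> 1" and nZ: "y \<notin> Z" and n1: "y \<notin> B1" and n2: "y \<notin> B2"
      and n3: "y \<notin> B3" for y
  proof -
    define z where "z k = xk k y" for k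
    have zX: "z k \<in> X" for k by (simp add: z_def xkX)
    have Dk: "norm (Gk k y - f' (z k)) \<le> M2" if "k < N" for k
      using nZ y that fF'[OF zX[of k]] by (auto simp: Z_def z_def not_less)
    have S1: "- (\<Theta>1 * M1 * q) < (\<Sum>k<N. \<delta> k y)" using n1 y by (auto simp: B1_def q_def sum_negf)
    have S3: "(\<Sum>k<N. \<delta> k y) < \<Theta>3 * M1 * q" using n3 y by (auto simp: B3_def q_def)
    have gsum: "(\<Sum>k<N. gk k y) = (\<Sum>k<N. f (z k)) + (\<Sum>k<N. \<delta> k y)"
    proof -
      have "gk k y = f (z k) + \<delta> k y" for k using fF[OF zX[of k]] by (simp add: \<delta>_def z_def)
      then show ?thesis by (simp add: sum.distrib)
    qed
    have fmin: "real N * f xs \<le> (\<Sum>k<N. f (z k))"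
      using sum_mono[of "{..<N}" "\<lambda>k. f xs" "\<lambda>k. f (z k)"] xs(2)[OF zX] by simp
    have Y2: "(\<Sum>k<N. Yv k y) \<le> \<Theta>2 * \<sigma> * q"
    proof (cases "\<sigma> > 0")
      case True then show ?thesis using n2 y by (auto simp: B2_def q_def)
    next
      case False
      then have \<sigma>z: "\<sigma> = 0" using \<sigma>0 by simp
      have "Yv k y \<le> 0" if "k < N" for k
      proof -
        have "Yv k y \<le> \<bar>inner (Gk k y - Fg' (xk k y)) (xk k y - xs)\<bar>" by (simp add: Yv_def)
        also have "\<dots> \<le> norm (Gk k y - Fg' (xk k y)) * norm (xk k y - xs)" by (rule Cauchy_Schwarz_ineq2)
        also have "\<dots> \<le> M2 * (2 * DX)"
          using Dk[OF that] fF'[OF zX[of k]] D2[OF zX[of k]] M2_nn by (intro mult_mono) (auto simp: z_def)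
        also have "\<dots> = 0" using \<sigma>z by (auto simp: \<sigma>_def)
        finally show ?thesis .
      qed
      then have "(\<Sum>k<N. Yv k y) \<le> 0" by (intro sum_nonpos) auto
      then show ?thesis using \<sigma>z by simp
    qed
    have Gn: "(norm (Gk k y))\<^sup>2 \<le> 2 * s" if "k < N" for k
    proof -
      have "norm (Gk k y) \<le> norm (f' (z k)) + norm (Gk k y - f' (z k))"
        using norm_triangle_ineq[of "f' (z k)" "Gk k y - f' (z k)"] by simp
      also have "\<dots> \<le> L + M2" using A1[OF zX[of k]] Dk[OF that] by simp
      finally have "norm (Gk k y) \<le> L + M2" .
      then have "(norm (Gk k y))\<^sup>2 \<le> (L + M2)\<^sup>2" by (intro power_mono) auto
      also have "\<dots> \<le> 2 * s"
      proof -
        have "0 \<le> (L - M2)\<^sup>2" by simp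
        then show ?thesis by (simp add: s_def power2_eq_square algebra_simps)
      qed
      finally show ?thesis .
    qed
    have rsa: "(\<Sum>k<N. inner (Gk k y) (z k - xs)) \<le> q * DX * r"
    proof (cases "DX = 0")
      case True
      have "z k - xs = 0" for k using D2[OF zX[of k]] True by simp
      then show ?thesis using True by simp
    next
      case False
      then have DXp: "DX > 0" using DX0 by simp
      have \<gamma>p: "\<gamma> > 0" using DXp r q by (simp add: \<gamma>e)
      have tel: "2 * \<gamma> * (\<Sum>k<N. inner (Gk k y) (z k - xs))
          \<le> (norm (z 0 - xs))\<^sup>2 - (norm (z N - xs))\<^sup>2 + \<gamma>\<^sup>2 * (\<Sum>k<N. (norm (Gk k y))\<^sup>2)"
        by (rule rsa_telescope[OF X(4) X(2) X(1) xs(1)]) (simp add: z_def xkS Gk_def)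
      have z0: "(norm (z 0 - xs))\<^sup>2 \<le> DX\<^sup>2"
      proof -
        have "norm (z 0 - xs) \<le> DX" using DXb[OF xs(1)] by (simp add: z_def xk0 norm_minus_commute)
        then show ?thesis by (intro power_mono) auto
      qed
      have "(\<Sum>k<N. (norm (Gk k y))\<^sup>2) \<le> (\<Sum>k<N. 2 * s)" by (intro sum_mono Gn) auto
      then have sG: "\<gamma>\<^sup>2 * (\<Sum>k<N. (norm (Gk k y))\<^sup>2) \<le> \<gamma>\<^sup>2 * (real N * (2 * s))"
        by (intro mult_left_mono) auto
      have "2 * \<gamma> * (\<Sum>k<N. inner (Gk k y) (z k - xs)) \<le> DX\<^sup>2 + \<gamma>\<^sup>2 * (real N * (2 * s))"
        using tel z0 sG by (smt (verit) zero_le_power2)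
      also have "\<dots> = 2 * \<gamma> * (q * DX * r)"
      proof -
        have "\<gamma>\<^sup>2 * (real N * (2 * s)) = (DX / (r * q))\<^sup>2 * ((q * q) * (r * r))" by (simp add: \<gamma>e q(2) r(2))
        also have "\<dots> = DX\<^sup>2" using r(1) q(1) by (simp add: power2_eq_square field_simps)
        finally have a: "\<gamma>\<^sup>2 * (real N * (2 * s)) = DX\<^sup>2" .
        have "2 * \<gamma> * (q * DX * r) = 2 * DX\<^sup>2" using r(1) q(1) by (simp add: \<gamma>e power2_eq_square field_simps)
        then show ?thesis using a by simp
      qed
      finally show ?thesis using \<gamma>p by simp
    qed
    have fsub: "f (z k) - f xs \<le> inner (Gk k y) (z k - xs) + Yv k y" for k
    proof -
      have "f xs \<ge> f (z k) + inner (f' (z k)) (xs - z k)"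
        using f'_sub[OF zX[of k]] xs(1) by (auto simp: is_subgradient_def)
      moreover have "inner (Gk k y) (z k - xs) + Yv k y = inner (f' (z k)) (z k - xs)"
        using fF'[OF zX[of k]] by (simp add: Yv_def z_def inner_diff_left)
      moreover have "inner (f' (z k)) (xs - z k) = - inner (f' (z k)) (z k - xs)"
        by (simp add: inner_diff_right)
      ultimately show ?thesis by linarith
    qed
    have "(\<Sum>k<N. f (z k) - f xs) \<le> (\<Sum>k<N. inner (Gk k y) (z k - xs) + Yv k y)"
      by (intro sum_mono fsub)
    also have "\<dots> = (\<Sum>k<N. inner (Gk k y) (z k - xs)) + (\<Sum>k<N. Yv k y)" by (simp add: sum.distrib)
    also have "\<dots> \<le> q * DX * r + \<Theta>2 * \<sigma> * q" using rsa Y2 by linarith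
    also have "\<dots> \<le> real N * b" by (rule key[OF T2])
    finally have low: "(\<Sum>k<N. f (z k)) \<le> real N * f xs + real N * b" by (simp add: sum_subtractf)
    show ?thesis using gsum fmin low S1 S3 a1e a3e by (simp add: algebra_simps)
  qed
  define T where "T \<omega> = (\<lambda>i\<in>{..<N}. xi i \<omega>)" for \<omega>
  have rsaT: "rsa_iter X G \<gamma> x1 xi k \<omega> = xk k (T \<omega>)" if "k \<le> N" for k \<omega>
    using that by (induction k) (auto simp: xk0 xkS T_def)
  have gNT: "gN X g G \<gamma> x1 xi N \<omega> = (\<Sum>k<N. gk k (T \<omega>)) / real N" for \<omega>
    unfolding gN_def by (intro arg_cong[where f="\<lambda>x. x / real N"] sum.cong) (auto simp: gk_def rsaT T_def)
  have indepN: "M.indep_vars (\<lambda>_. S) xi {..<N}" using M.indep_vars_subset[OF indep] by auto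
  have Tm: "T \<in> measurable M (PiM {..<N} (\<lambda>_. S))" unfolding T_def using rv by (intro measurable_restrict) auto
  have distrT: "distr M (PiM {..<N} (\<lambda>_. S)) T = \<Omega>"
  proof -
    have "0 \<in> {..<N}" using N by simp
    then have ne: "{..<N} \<noteq> {}" by blast
    have "distr M (PiM {..<N} (\<lambda>_. S)) T = PiM {..<N} (\<lambda>i. distr M S (xi i))"
      using M.indep_vars_iff_distr_eq_PiM[OF ne, where M'="\<lambda>_. S" and X=xi] indepN rv unfolding T_def by auto
    also have "\<dots> = \<Omega>" unfolding \<Omega>_def P_def by (rule PiM_cong) (rule refl, rule ident)
    finally show ?thesis .
  qed
  have sets_eq: "sets (PiM {..<N} (\<lambda>_. S)) = sets \<Omega>" unfolding \<Omega>_def by (intro sets_PiM_cong) (auto simp: sets_P)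
  have space_eq: "space (PiM {..<N} (\<lambda>_. S)) = space \<Omega>" by (rule sets_eq_imp_space_eq[OF sets_eq])
  define Good where "Good = {y \<in> space \<Omega>. (\<Sum>k<N. gk k y) / real N - b - a3 \<le> f xs \<and> f xs \<le> (\<Sum>k<N. gk k y) / real N + a1}"
  have Goods: "Good \<in> sets \<Omega>"
  proof -
    have "(\<lambda>y. \<Sum>k<N. gk k y) \<in> borel_measurable \<Omega>" by (rule summ) (use gkm in \<open>auto simp: \<Omega>_def\<close>)
    then show ?thesis unfolding Good_def by measurable
  qed
  have lhs: "measure M {\<omega> \<in> space M.
            gN X g G \<gamma> x1 xi N \<omega> - b_bnd \<Theta>2 DX M1 M2 L N - a_bnd \<Theta>3 M1 N \<le> f xs \<and>
            f xs \<le> gN X g G \<gamma> x1 xi N \<omega> + a_bnd \<Theta>1 M1 N} = measure \<Omega> Good"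
  proof -
    have Tsp: "T \<omega> \<in> space \<Omega>" if "\<omega> \<in> space M" for \<omega>
      using measurable_space[OF Tm that] space_eq by simp
    have "{\<omega> \<in> space M.
            gN X g G \<gamma> x1 xi N \<omega> - b_bnd \<Theta>2 DX M1 M2 L N - a_bnd \<Theta>3 M1 N \<le> f xs \<and>
            f xs \<le> gN X g G \<gamma> x1 xi N \<omega> + a_bnd \<Theta>1 M1 N} = T -` Good \<inter> space M"
      using Tsp by (auto simp: Good_def gNT a1_def a3_def b_def)
    also have "measure M (T -` Good \<inter> space M) = measure (distr M (PiM {..<N} (\<lambda>_. S)) T) Good"
      using Tm Goods sets_eq by (subst measure_distr) auto
    also have "\<dots> = measure \<Omega> Good" by (simp add: distrT)
    finally show ?thesis .
  qed
  show ?thesis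
  proof (cases "\<Theta>2 \<ge> 1")
    case False
    have "\<Theta>2 * \<Theta>2 < 1 * 1" using False \<Theta>(2) by (intro mult_strict_mono) auto
    then have "\<Theta>2\<^sup>2 < 1" by (simp add: power2_eq_square)
    then have "1 \<le> exp (1 - \<Theta>2\<^sup>2)" by simp
    moreover have "0 \<le> measure M {\<omega> \<in> space M.
            gN X g G \<gamma> x1 xi N \<omega> - b_bnd \<Theta>2 DX M1 M2 L N - a_bnd \<Theta>3 M1 N \<le> f xs \<and>
            f xs \<le> gN X g G \<gamma> x1 xi N \<omega> + a_bnd \<Theta>1 M1 N}" by simp
    moreover have "0 < exp (- \<Theta>1\<^sup>2 / 4)" "0 < exp (- \<Theta>2\<^sup>2 / 4)" "0 < exp (- \<Theta>3\<^sup>2 / 4)" by auto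
    ultimately show ?thesis by linarith
  next
    case True
    define U where "U = Z \<union> B1 \<union> B2 \<union> B3"
    have Us: "U \<in> sets \<Omega>" unfolding U_def using Zs B1s B2s B3s by auto
    have sub: "space \<Omega> - U \<subseteq> Good"
    proof
      fix y assume yU: "y \<in> space \<Omega> - U"
      then have y: "y \<in> space \<Omega>" and nn: "y \<notin> Z" "y \<notin> B1" "y \<notin> B2" "y \<notin> B3" by (auto simp: U_def)
      from det[OF y True nn] have d1: "real N * f xs \<le> (\<Sum>k<N. gk k y) + real N * a1"
        and d2: "(\<Sum>k<N. gk k y) \<le> real N * (f xs + b + a3)" by auto
      have "(\<Sum>k<N. gk k y) / real N \<le> f xs + b + a3"
        using d2 Npos by (simp add: pos_divide_le_eq mult.commute)
      moreover have "f xs - a1 \<le> (\<Sum>k<N. gk k y) / real N"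
      proof -
        have "(f xs - a1) * real N \<le> (\<Sum>k<N. gk k y)" using d1 by (simp add: algebra_simps)
        then show ?thesis by (simp add: pos_le_divide_eq[OF Npos])
      qed
      ultimately show "y \<in> Good" using y by (auto simp: Good_def)
    qed
    have "measure \<Omega> (space \<Omega> - U) \<le> measure \<Omega> Good" by (rule \<Omega>.finite_measure_mono[OF sub Goods])
    moreover have "measure \<Omega> (space \<Omega> - U) = 1 - measure \<Omega> U" by (rule \<Omega>.prob_compl[OF Us])
    moreover have "measure \<Omega> U \<le> measure \<Omega> Z + measure \<Omega> B1 + measure \<Omega> B2 + measure \<Omega> B3"
    proof -
      have "measure \<Omega> U \<le> measure \<Omega> (Z \<union> B1 \<union> B2) + measure \<Omega> B3"
        unfolding U_def using Zs B1s B2s B3s by (intro measure_subadditive) (auto simp: \<Omega>.emeasure_eq_measure)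
      moreover have "measure \<Omega> (Z \<union> B1 \<union> B2) \<le> measure \<Omega> (Z \<union> B1) + measure \<Omega> B2"
        using Zs B1s B2s by (intro measure_subadditive) (auto simp: \<Omega>.emeasure_eq_measure)
      moreover have "measure \<Omega> (Z \<union> B1) \<le> measure \<Omega> Z + measure \<Omega> B1"
        using Zs B1s by (intro measure_subadditive) (auto simp: \<Omega>.emeasure_eq_measure)
      ultimately show ?thesis by linarith
    qed
    moreover have "0 \<le> exp (1 - \<Theta>2\<^sup>2)" by simp
    ultimately show ?thesis using lhs Zp B1p B2p B3p by linarith
  qed
qed


end
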